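(* Let $p$ be the POP of length 4 defined by the single relation $1>2$ (labels $3,4$ isolated); equivalently, avoiding $p$ means avoiding all 12 patterns of length 4 whose first entry exceeds the second. Let $a(n)=|S_n(p)|$. Then $a(n)=n!$ for $n\in\{0,1,2,3\}$ and $a(n)=n(n-1)$ for $n\geq 4$. Moreover, $$\sum_{n\geq 0}a(n)x^n=\frac{1-2x+2x^2+2x^3-x^4}{(1-x)^3}.$$
   Context: An $n$-permutation is a word $\pi=\pi_1\cdots\pi_n$ containing each of $1,\ldots,n$ exactly once; $S_n$ is the set of $n$-permutations ($S_0$ consists of the empty permutation). A partially ordered pattern (POP) $p$ of length $k$ is a partial order on the label set $\{1,\ldots,k\}$; it is described by a set of generating relations, where a relation $x>y$ means that in an occurrence the entry in the $x$-th chosen position must be larger than the entry in the $y$-th chosen position, and labels not involved in any relation are unconstrained. An $n$-permutation $\pi$ contains $p$ if there are indices $1\leq i_1<\cdots<i_k\leq n$ such that $\pi_{i_x}>\pi_{i_y}$ whenever $x>y$ in the partial order; otherwise $\pi$ avoids $p$. $S_n(p)$ denotes the set of $n$-permutations avoiding $p$. *)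

theory Defs
  imports Complex_Main "HOL-Computational_Algebra.Formal_Power_Series"
begin

definition perms :: "nat \<Rightarrow> nat list set" where
  "perms n = {w. distinct w \<and> set w = {1..n}}"

text \<open>A POP of length k is given by a set R of generating relations (x,y), meaning x > y,
  on labels 1..k. Positions in the word are 1-based: the entry at position i is w ! (i - 1).\<close>
definition contains_pop :: "nat \<Rightarrow> (nat \<times> nat) set \<Rightarrow> nat list \<Rightarrow> bool" where
  "contains_pop k R w \<longleftrightarrow>
     (\<exists>idx :: nat \<Rightarrow> nat.
        strict_mono_on {1..k} idx \<and>
        (\<forall>x\<in>{1..k}. 1 \<le> idx x \<and> idx x \<le> length w) \<and>
        (\<forall>(x, y)\<in>R. w ! (idx x - 1) > w ! (idx y - 1)))"

definition avoiders :: "nat \<Rightarrow> (nat \<times> nat) set \<Rightarrow> nat \<Rightarrow> nat list set" where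
  "avoiders k R n = {w \<in> perms n. \<not> contains_pop k R w}"

end

theory Submission
  imports Defs
begin

lemma contains_iff:
  "contains_pop 4 {(1,2)} w \<longleftrightarrow> (\<exists>i j. i < j \<and> j + 2 < length w \<and> w!i > w!j)"
proof
  assume "contains_pop 4 {(1,2)} w"
  then obtain idx where sm: "strict_mono_on {1..4::nat} idx"
    and b: "\<forall>x\<in>{1..4}. 1 \<le> idx x \<and> idx x \<le> length w"
    and r: "w ! (idx 1 - 1) > w ! (idx 2 - 1)"
    unfolding contains_pop_def by auto
  have "idx 1 < idx 2" "idx 2 < idx 3" "idx 3 < idx 4"
    using sm unfolding strict_mono_on_def by auto
  moreover have "1 \<le> idx 1" "idx 4 \<le> length w" using b by auto
  ultimately show "\<exists>i j. i < j \<and> j + 2 < length w \<and> w!i > w!j"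
    using r by (intro exI[of _ "idx 1 - 1"] exI[of _ "idx 2 - 1"]) auto
next
  assume "\<exists>i j. i < j \<and> j + 2 < length w \<and> w!i > w!j"
  then obtain i j where h: "i < j" "j + 2 < length w" "w!i > w!j" by auto
  define idx where "idx = (\<lambda>x::nat. if x = 1 then i+1 else if x = 2 then j+1 else if x = 3 then length w - 1 else length w)"
  have e: "{1..4::nat} = {1,2,3,4}" by auto
  have "strict_mono_on {1..4} idx"
    unfolding strict_mono_on_def e using h by (auto simp: idx_def)
  moreover have "\<forall>x\<in>{1..4}. 1 \<le> idx x \<and> idx x \<le> length w"
    unfolding e using h by (auto simp: idx_def)
  moreover have "\<forall>(x, y)\<in>{(1::nat,2::nat)}. w ! (idx x - 1) > w ! (idx y - 1)"
    using h by (auto simp: idx_def)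
  ultimately show "contains_pop 4 {(1,2)} w" unfolding contains_pop_def by blast
qed

lemma avoid_iff:
  "\<not> contains_pop 4 {(1,2)} w \<longleftrightarrow> sorted (take (length w - 2) w)"
proof -
  have "(\<exists>i j. i < j \<and> j + 2 < length w \<and> w!i > w!j) \<longleftrightarrow>
        (\<exists>i j. i < j \<and> j < length (take (length w - 2) w) \<and> 
            take (length w - 2) w ! i > take (length w - 2) w ! j)"
    apply (rule iffI)
    apply (elim exE conjE, rule_tac x=i in exI, rule_tac x=j in exI, simp add: nth_take)
    apply (elim exE conjE, rule_tac x=i in exI, rule_tac x=j in exI, simp add: nth_take)
    done
  moreover have "sorted t \<longleftrightarrow> \<not>(\<exists>i j. i<j \<and> j < length t \<and> t!i > t!j)" for t :: "nat list"
    unfolding sorted_iff_nth_mono_less by (meson not_less)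
  ultimately show ?thesis unfolding contains_iff by simp
qed

lemma perms_length: "w \<in> perms n \<Longrightarrow> length w = n"
  unfolding perms_def using distinct_card by fastforce

lemma card_perms: "card (perms n) = fact n"
proof -
  have "perms n = {xs. length xs = n \<and> distinct xs \<and> set xs \<subseteq> {1..n}}"
  proof (intro set_eqI iffI)
    fix xs assume "xs \<in> perms n"
    then show "xs \<in> {xs. length xs = n \<and> distinct xs \<and> set xs \<subseteq> {1..n}}"
      using perms_length unfolding perms_def by auto
  next
    fix xs assume "xs \<in> {xs. length xs = n \<and> distinct xs \<and> set xs \<subseteq> {1..n}}"
    then have h: "length xs = n" "distinct xs" "set xs \<subseteq> {1..n}" by auto
    then have "card (set xs) = card {1..n}" by (simp add: distinct_card)
    then have "set xs = {1..n}" using h(3) by (simp add: card_subset_eq)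
    then show "xs \<in> perms n" using h unfolding perms_def by auto
  qed
  then show ?thesis using card_lists_distinct_length_eq[of "{1..n}" n]
    by (simp add: fact_prod)
qed

lemma small: assumes "n \<le> 3" shows "avoiders 4 {(1,2)} n = perms n"
proof -
  { fix w assume "w \<in> perms n"
    then have "length w = n" by (rule perms_length)
    then have "sorted (take (length w - 2) w)" using assms
      by (cases w rule: rev_cases) (auto simp: sorted_iff_nth_mono_less) }
  then show ?thesis unfolding avoiders_def avoid_iff by auto
qed

lemma big:
  assumes n: "n \<ge> 2"
  shows "card (avoiders 4 {(1,2)} n) = n * (n - 1)"
proof -
  define S where "S = Sigma {1..n} (\<lambda>a. {1..n} - {a})"
  define f where "f = (\<lambda>(a::nat,b::nat). sorted_list_of_set ({1..n} - {a,b}) @ [a,b])"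
  have cS: "card S = n * (n - 1)"
    unfolding S_def by (subst card_SigmaI) auto
  have inj: "inj_on f S"
  proof (rule inj_onI)
    fix p q assume "p \<in> S" "q \<in> S" "f p = f q"
    then have "rev (f p) = rev (f q)" by simp
    then show "p = q" unfolding f_def by (cases p; cases q) auto
  qed
  have eq: "avoiders 4 {(1,2)} n = f ` S"
  proof (intro set_eqI iffI)
    fix w assume w: "w \<in> avoiders 4 {(1,2)} n"
    then have wp: "w \<in> perms n" and srt: "sorted (take (length w - 2) w)"
      unfolding avoiders_def avoid_iff by auto
    have lw: "length w = n" using wp by (rule perms_length)
    obtain u b where u: "w = u @ [b]" using lw n by (cases w rule: rev_cases) auto
    obtain xs a where xs: "u = xs @ [a]" using lw n u by (cases u rule: rev_cases) auto
    have ww: "w = xs @ [a, b]" using u xs by simp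
    have d: "distinct w" "set w = {1..n}" using wp unfolding perms_def by auto
    have sx: "sorted xs" using srt ww by simp
    have setxs: "set xs = {1..n} - {a,b}" using d ww by auto
    have "sorted_list_of_set ({1..n} - {a,b}) = xs"
      by (rule sorted_distinct_set_unique) (use d ww sx setxs in auto)
    moreover have "(a,b) \<in> S" using d ww unfolding S_def by auto
    ultimately show "w \<in> f ` S" unfolding f_def ww by force
  next
    fix w assume "w \<in> f ` S"
    then obtain p where p: "p \<in> S" "w = f p" by blast
    obtain a b where pab: "p = (a,b)" by (cases p)
    have ab: "a \<in> {1..n}" "b \<in> {1..n}" "a \<noteq> b" using p pab unfolding S_def by auto
    have w: "w = sorted_list_of_set ({1..n} - {a,b}) @ [a,b]" using p pab unfolding f_def by simp
    have "card ({1..n} - {a,b}) = n - 2" using ab by (subst card_Diff_subset) auto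
    then have l: "length (sorted_list_of_set ({1..n} - {a,b})) = n - 2" by simp
    have "w \<in> perms n" unfolding perms_def w using ab by auto
    moreover have "sorted (take (length w - 2) w)" unfolding w using l by simp
    ultimately show "w \<in> avoiders 4 {(1,2)} n" unfolding avoiders_def avoid_iff by auto
  qed
  show ?thesis unfolding eq using card_image[OF inj] cS by simp
qed

context includes fps_syntax
begin

lemma cube_expand: "(1 - fps_X :: rat fps) ^ 3 = 1 - fps_const 3 * fps_X + fps_const 3 * fps_X^2 - fps_X^3"
proof -
  have "(1 - fps_X :: rat fps) ^ 3 = 1 - 3 * fps_X + 3 * fps_X^2 - fps_X^3"
    by (simp add: power3_eq_cube power2_eq_square algebra_simps)
  then show ?thesis by (simp add: numeral_fps_const)
qed

lemma coeff3: "(F * (1 - fps_X)^3) $ n = F $ n - 3*(if n<1 then 0 else F $ (n-1))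
   + 3*(if n<2 then 0 else F $ (n-2)) - (if n<3 then 0 else F $ (n-3))" for F :: "rat fps"
proof -
  have "F * (1 - fps_X)^3 = F - fps_const 3 * (fps_X^1 * F) + fps_const 3 * (fps_X^2 * F) - fps_X^3 * F"
    unfolding cube_expand by (simp add: algebra_simps)
  then show ?thesis by (simp only: fps_sub_nth fps_add_nth fps_mult_left_const_nth fps_X_power_mult_nth)
qed

lemma P_nth: "((1 - 2 * fps_X + 2 * fps_X ^ 2 + 2 * fps_X ^ 3 - fps_X ^ 4 :: rat fps)) $ n =
   (if n = 0 then 1 else if n = 1 then -2 else if n = 2 then 2 else if n = 3 then 2 else if n = 4 then -1 else 0)"
  by (simp add: numeral_fps_const fps_X_power_iff)

lemma main_fps:
  fixes b :: "nat \<Rightarrow> rat"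
  assumes b: "\<And>n. b n = of_nat n * (of_nat n - 1) + (if n \<le> 1 then 1 else 0)"
  shows "Abs_fps b = (1 - 2 * fps_X + 2 * fps_X ^ 2 + 2 * fps_X ^ 3 - fps_X ^ 4) / (1 - fps_X) ^ 3"
proof -
  have prod: "Abs_fps b * (1 - fps_X)^3 = (1 - 2 * fps_X + 2 * fps_X ^ 2 + 2 * fps_X ^ 3 - fps_X ^ 4)"
  proof (rule fps_ext)
    fix n
    have key: "b n - 3*(if n<1 then 0 else b (n-1)) + 3*(if n<2 then 0 else b (n-2)) - (if n<3 then 0 else b (n-3))
      = (if n = 0 then 1 else if n = 1 then -2 else if n = 2 then 2 else if n = 3 then 2 else if n = 4 then -1 else 0)"
    proof (cases "n \<le> 4")
      case True
      then have "n = 0 \<or> n = 1 \<or> n = 2 \<or> n = 3 \<or> n = 4" by auto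
      then show ?thesis by (elim disjE) (simp_all add: b)
    next
      case False
      then obtain m where m: "n = m + 5" by (metis add.commute le_Suc_ex not_le numeral_eq_Suc Suc_leI pred_numeral_simps(3)  add_Suc_right)
      show ?thesis unfolding m by (simp add: b algebra_simps)
    qed
    show "(Abs_fps b * (1 - fps_X)^3) $ n = (1 - 2 * fps_X + 2 * fps_X ^ 2 + 2 * fps_X ^ 3 - fps_X ^ 4 :: rat fps) $ n"
      by (subst coeff3, subst P_nth, simp only: fps_nth_Abs_fps, rule key)
  qed
  have nz: "(1 - fps_X :: rat fps)^3 \<noteq> 0"
  proof
    assume "(1 - fps_X :: rat fps)^3 = 0"
    then have "((1 - fps_X :: rat fps)^3) $ 0 = 0" by simp
    then show False by simp
  qed
  show ?thesis unfolding prod[symmetric] using nz by simp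
qed

end

theorem theorem3p1:
  fixes a :: "nat \<Rightarrow> nat"
  defines "a \<equiv> \<lambda>n. card (avoiders 4 {(1, 2)} n)"
  shows "(\<forall>n\<in>{0, 1, 2, 3}. a n = fact n)
       \<and> (\<forall>n\<ge>4. a n = n * (n - 1))
       \<and> Abs_fps (\<lambda>n. (of_nat (a n) :: rat))
           = (1 - 2 * fps_X + 2 * fps_X ^ 2 + 2 * fps_X ^ 3 - fps_X ^ 4) / (1 - fps_X) ^ 3"
proof -
  have sm: "a n = fact n" if "n \<le> 3" for n
    unfolding a_def using small[OF that] card_perms by simp
  have bg: "a n = n * (n - 1)" if "n \<ge> 2" for n
    unfolding a_def using big[OF that] .
  define b :: "nat \<Rightarrow> rat" where "b n = of_nat n * (of_nat n - 1) + (if n \<le> 1 then 1 else 0)" for n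
  have ab: "(\<lambda>n. (of_nat (a n) :: rat)) = b"
  proof
    fix n
    show "of_nat (a n) = b n"
    proof (cases "n \<le> 1")
      case True
      then have "n = 0 \<or> n = 1" by auto
      then show ?thesis using sm[of n] by (auto simp: b_def)
    next
      case False
      then show ?thesis using bg[of n] by (simp add: b_def of_nat_diff)
    qed
  qed
  have "Abs_fps b = (1 - 2 * fps_X + 2 * fps_X ^ 2 + 2 * fps_X ^ 3 - fps_X ^ 4) / (1 - fps_X) ^ 3"
    by (rule main_fps) (simp add: b_def)
  then show ?thesis using sm bg ab by auto
qed

end
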